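(* Let $n\ge 5$ and let $C_n$ be the cycle with $n$ vertices. Then $C_n$ is not a $2$-threshold graph: there are no real numbers $\theta_1<\theta_2$ and map $r:V(C_n)\to\mathbb{R}$ such that for all distinct vertices $u,v$, $uv$ is an edge if and only if $\theta_1\le r(u)+r(v)<\theta_2$.
   Context: All graphs are finite and simple. $C_n$ denotes the cycle with $n$ vertices. *)

theory Defs
  imports Complex_Main
begin

definition cycle_adj :: "nat \<Rightarrow> nat \<Rightarrow> nat \<Rightarrow> bool" where
  "cycle_adj n i j \<longleftrightarrow> i < n \<and> j < n \<and> i \<noteq> j \<and>
     (j = (i + 1) mod n \<or> i = (j + 1) mod n)"

definition two_threshold :: "'a set \<Rightarrow> ('a \<Rightarrow> 'a \<Rightarrow> bool) \<Rightarrow> bool" where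
  "two_threshold V E \<longleftrightarrow> (\<exists>(th1::real) th2 (r::'a \<Rightarrow> real). th1 < th2 \<and>
     (\<forall>u\<in>V. \<forall>v\<in>V. u \<noteq> v \<longrightarrow> (E u v \<longleftrightarrow> th1 \<le> r u + r v \<and> r u + r v < th2)))"

end

theory Submission
  imports Defs
begin


lemma odd_case:
  fixes R :: "int \<Rightarrow> real" and n :: nat
  assumes n: "n \<ge> 5"
  and E: "\<forall>k. a \<le> R k + R (k+1) \<and> R k + R (k+1) < b"
  and N: "\<forall>k l. a \<le> R k + R l \<longrightarrow> R k + R l < b \<longrightarrow> (k - l) mod int n \<in> {0, 1, int n - 1}"
  and P: "\<forall>k. R k = R (k mod int n)"
  and od: "odd n"
  shows False
proof -
  define L where "L k \<longleftrightarrow> R k + R (k+2) < a" for k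
  have m2: "(k - (k+2)) mod int n \<notin> {0, 1, int n - 1}" for k
  proof -
    have "(k - (k+2)) mod int n = int n - 2"
      using n by (simp add: zmod_zminus1_eq_if)
    then show ?thesis using n by simp
  qed
  have alt: "L (k+1) \<longleftrightarrow> \<not> L k" for k
  proof -
    have e1: "a \<le> R k + R (k+1)" "R k + R (k+1) < b" using E by auto
    have e2: "a \<le> R (k+2) + R (k+3)" "R (k+2) + R (k+3) < b" using E[rule_format, of "k+2"] by (auto simp: add.assoc)
    have n1: "R k + R (k+2) < a \<or> R k + R (k+2) \<ge> b" using N[rule_format, of k "k+2"] m2[of k] by force
    have n2: "R (k+1) + R (k+3) < a \<or> R (k+1) + R (k+3) \<ge> b"
      using N[rule_format, of "k+1" "k+3"] m2[of "k+1"] by (force simp: add.assoc)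
    show ?thesis unfolding L_def using e1 e2 n1 n2 by (auto simp: add.assoc)
  qed
  have two: "L (k + 2 * int t) \<longleftrightarrow> L k" for k t
  proof (induction t)
    case 0 then show ?case by simp
  next
    case (Suc t)
    have "L (k + 2 * int (Suc t)) = L ((k + 2 * int t + 1) + 1)" by (simp add: algebra_simps)
    also have "\<dots> = L (k + 2 * int t)" using alt[of "k + 2 * int t + 1"] alt[of "k + 2 * int t"] by blast
    finally show ?case using Suc by simp
  qed
  obtain t where t: "n = 2*t+1" using od oddE by blast
  have "L (int n) \<longleftrightarrow> L 0"
  proof -
    have "R (int n) = R 0" using P[rule_format, of "int n"] P[rule_format, of 0] by (metis mod_self mod_0)
    moreover have "R (int n + 2) = R 2"
    proof -
      have "(int n + 2) mod int n = 2 mod int n" by simp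
      then show ?thesis using P[rule_format, of "int n + 2"] P[rule_format, of 2] by metis
    qed
    ultimately show ?thesis unfolding L_def by simp
  qed
  moreover have "L (int n) \<longleftrightarrow> \<not> L 0"
  proof -
    have "L (int n) = L ((0 + 2 * int t) + 1)" using t by (simp add: add.commute)
    also have "\<dots> = (\<not> L 0)" using alt[of "0 + 2 * int t"] two[of 0 t] by blast
    finally show ?thesis .
  qed
  ultimately show False by simp
qed



lemma even_case:
  fixes R :: "int \<Rightarrow> real" and n :: nat
  assumes n: "n \<ge> 5"
  and E: "\<forall>k. a \<le> R k + R (k+1) \<and> R k + R (k+1) < b"
  and N: "\<forall>k l. a \<le> R k + R l \<longrightarrow> R k + R l < b \<longrightarrow> (k - l) mod int n \<in> {0, 1, int n - 1}"
  and P: "\<forall>k. R k = R (k mod int n)"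
  and ev: "even n"
  shows False
proof -
  have n6: "n \<ge> 6" using n ev by presburger
  have evm: "even (k mod int n) \<longleftrightarrow> even k" for k
    using ev by (metis dvd_mod_iff even_of_nat_iff) 
  define S where "S = {k. 0 \<le> k \<and> k < int n \<and> even k}"
  define T where "T = {k. 0 \<le> k \<and> k < int n \<and> odd k}"
  have fS: "finite S" unfolding S_def by (rule finite_subset[of _ "{0..<int n}"]) auto
  have fT: "finite T" unfolding T_def by (rule finite_subset[of _ "{0..<int n}"]) auto
  have "0 \<in> S" using n unfolding S_def by auto
  have "1 \<in> T" using n unfolding T_def by auto
  obtain e where eS: "e \<in> S" and emin: "\<forall>j\<in>S. R e \<le> R j"
  proof -
    have "Min (R ` S) \<in> R ` S" using fS \<open>0 \<in> S\<close> by (intro Min_in) auto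
    then obtain e where "e \<in> S" "R e = Min (R ` S)" by auto
    then show ?thesis using that fS by auto
  qed
  obtain q where oT: "q \<in> T" and omax: "\<forall>j\<in>T. R j \<le> R q"
  proof -
    have "Max (R ` T) \<in> R ` T" using fT \<open>1 \<in> T\<close> by (intro Max_in) auto
    then obtain q where "q \<in> T" "R q = Max (R ` T)" by auto
    then show ?thesis using that fT by auto
  qed
  have ee: "even e" using eS S_def by auto
  have oo: "odd q" using oT T_def by auto
  have emin': "R e \<le> R j" if "even j" for j
  proof -
    have "j mod int n \<in> S" using that evm[of j] n unfolding S_def by auto
    then have "R e \<le> R (j mod int n)" using emin by blast
    moreover have "R j = R (j mod int n)" using P by blast
    ultimately show ?thesis by linarith
  qed
  have omax': "R j \<le> R q" if "odd j" for j
  proof -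
    have "j mod int n \<in> T" using that evm[of j] n unfolding T_def by auto
    then have "R (j mod int n) \<le> R q" using omax by blast
    moreover have "R j = R (j mod int n)" using P by blast
    ultimately show ?thesis by linarith
  qed
  have E1: "a \<le> R k + R (k+1)" "R k + R (k+1) < b" for k using E by auto
  have E2: "a \<le> R (k - 1) + R k" "R (k - 1) + R k < b" for k using E[rule_format, of "k - 1"] by auto
  have N': "R k + R l < a \<or> b \<le> R k + R l" if "(k - l) mod int n \<notin> {0, 1, int n - 1}" for k l
    using N[rule_format, of k l] that by linarith
  have par: "(k - l) mod int n \<noteq> 0" if "even k" "odd l" for k l
  proof
    assume "(k - l) mod int n = 0"
    then have "int n dvd k - l" by auto
    then have "even (k - l)" using ev by (meson dvd_trans even_of_nat_iff)
    then show False using that by auto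
  qed
  have "a \<le> R e + R q"
  proof -
    have "R (e+1) \<le> R q" using omax' ee by auto
    then show ?thesis using E1[of e] by linarith
  qed
  moreover have lt: "R e + R q < b"
  proof -
    have "R e \<le> R (q+1)" using emin' oo by auto
    then show ?thesis using E1[of q] by linarith
  qed
  ultimately have "(e - q) mod int n \<in> {0, 1, int n - 1}" using N[rule_format, of e q] by blast
  then have eo: "(e - q) mod int n \<in> {1, int n - 1}" using par[OF ee oo] by blast
  have m3: "(3::int) mod int n = 3" "(-3::int) mod int n = int n - 3" "(4::int) mod int n = 4"
    "(-4::int) mod int n = int n - 4" "(2::int) mod int n = 2" "(-2::int) mod int n = int n - 2"
    using n6 by (simp_all add: zmod_zminus1_eq_if)
  show False
  proof (cases "(e - q) mod int n = int n - 1")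
    case True
    have "R q = R (e+1)"
    proof -
      have "(e + 1) mod int n = q mod int n"
      proof -
        have "(e - q + 1) mod int n = ((e - q) mod int n + 1) mod int n" by (simp add: mod_add_left_eq)
        then have "(e - q + 1) mod int n = 0" using True by simp
        then have "int n dvd e + 1 - q" by (simp add: dvd_eq_mod_eq_0 algebra_simps)
        then show ?thesis by (simp add: mod_eq_dvd_iff)
      qed
      moreover have "R q = R (q mod int n)" using P by blast
      moreover have "R (e+1) = R ((e+1) mod int n)" using P by blast
      moreover have "R (e-1) = R ((e-1) mod int n)" using P by blast
      ultimately show ?thesis by metis
    qed
    have A: "R (e+2) < R (e-2)"
    proof (rule ccontr)
      assume "\<not> ?thesis"
      then have "R (e-2) + R (e+1) < b" using E1[of "e+1"] by (simp add: add.assoc)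
      moreover have "a \<le> R (e-2) + R (e+1)"
        using E2[of "e-1"] omax'[of "e-1"] \<open>R q = R (e+1)\<close> ee by auto
      ultimately show False using N'[of "e-2" "e+1"] m3 n6 by auto
    qed
    have B: "R (e+3) < R (e-1)"
    proof (rule ccontr)
      assume "\<not> ?thesis"
      then have "a \<le> R e + R (e+3)" using E2[of e] by linarith
      moreover have "R e + R (e+3) < b" using E1[of "e+3"] emin'[of "e+4"] ee by (simp add: add.assoc)
      ultimately show False using N'[of "e" "e+3"] m3 n6 by auto
    qed
    have "R (e+2) + R (e-1) < b" using A E2[of "e-1"] by auto
    moreover have "a \<le> R (e+2) + R (e-1)" using B E1[of "e+2"] by (simp add: add.assoc)
    ultimately show False using N'[of "e+2" "e-1"] m3 n6 by auto
  next
    case False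
    with eo have F: "(e - q) mod int n = 1" by auto
    have "R q = R (e - 1)"
    proof -
      have "(e - 1) mod int n = q mod int n"
      proof -
        have "(e - q - 1) mod int n = ((e - q) mod int n - 1) mod int n" by (simp add: mod_diff_left_eq)
        then have "(e - q - 1) mod int n = 0" using F by simp
        then have "int n dvd e - 1 - q" by (simp add: dvd_eq_mod_eq_0 algebra_simps)
        then show ?thesis by (simp add: mod_eq_dvd_iff)
      qed
      moreover have "R q = R (q mod int n)" using P by blast
      moreover have "R (e+1) = R ((e+1) mod int n)" using P by blast
      moreover have "R (e-1) = R ((e-1) mod int n)" using P by blast
      ultimately show ?thesis by metis
    qed
    have A: "R (e-2) < R (e+2)"
    proof (rule ccontr)
      assume "\<not> ?thesis"
      then have "R (e+2) + R (e-1) < b" using E2[of "e-1"] by auto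
      moreover have "a \<le> R (e+2) + R (e-1)"
        using E1[of "e+2"] omax'[of "e+3"] \<open>R q = R (e - 1)\<close> ee by (simp add: add.assoc)
      ultimately show False using N'[of "e+2" "e-1"] m3 n6 by auto
    qed
    have B: "R (e-3) < R (e+1)"
    proof (rule ccontr)
      assume "\<not> ?thesis"
      then have "a \<le> R e + R (e-3)" using E1[of e] by linarith
      moreover have "R e + R (e-3) < b" using E2[of "e-3"] emin'[of "e-4"] ee by auto
      ultimately show False using N'[of "e" "e-3"] m3 n6 by auto
    qed
    have "R (e-2) + R (e+1) < b" using A E1[of "e+1"] by (simp add: add.assoc)
    moreover have "a \<le> R (e-2) + R (e+1)" using B E2[of "e-2"] by auto
    ultimately show False using N'[of "e-2" "e+1"] m3 n6 by auto
  qed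
qed



lemma reduce:
  fixes n :: nat
  assumes n: "n \<ge> 5" and tt: "two_threshold {0..<n} (cycle_adj n)"
  obtains R :: "int \<Rightarrow> real" and a b where
   "\<forall>k. a \<le> R k + R (k+1) \<and> R k + R (k+1) < b"
   "\<forall>k l. a \<le> R k + R l \<longrightarrow> R k + R l < b \<longrightarrow> (k - l) mod int n \<in> {0, 1, int n - 1}"
   "\<forall>k. R k = R (k mod int n)"
proof -
  obtain a b :: real and r where abH: "a < b \<and> (\<forall>u\<in>{0..<n}. \<forall>v\<in>{0..<n}. u \<noteq> v \<longrightarrow>
      (cycle_adj n u v \<longleftrightarrow> a \<le> r u + r v \<and> r u + r v < b))"
    using tt unfolding two_threshold_def by (elim exE)
  then have H: "\<forall>u\<in>{0..<n}. \<forall>v\<in>{0..<n}. u \<noteq> v \<longrightarrow>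
      (cycle_adj n u v \<longleftrightarrow> a \<le> r u + r v \<and> r u + r v < b)" by (rule conjunct2)
  define R where "R k = r (nat (k mod int n))" for k
  have np: "int n > 0" using n by simp
  have P: "\<forall>k. R k = R (k mod int n)" unfolding R_def by simp
  have E: "\<forall>k. a \<le> R k + R (k+1) \<and> R k + R (k+1) < b"
  proof
    fix k
    define i where "i = nat (k mod int n)"
    define j where "j = nat ((k+1) mod int n)"
    have ii: "int i = k mod int n" using np unfolding i_def by simp
    have jj: "int j = (k+1) mod int n" using np unfolding j_def by simp
    have "int j = (int i + 1) mod int n" using jj ii by (simp add: mod_add_left_eq)
    then have j1: "j = (i+1) mod n" by (metis nat_int of_nat_1 of_nat_add zmod_int)
    have "i < n" "j < n" using ii jj np by (metis of_nat_less_iff pos_mod_bound)+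
    moreover have "i \<noteq> j" using j1 n \<open>i < n\<close>
    proof (cases "i + 1 < n")
      case True then show ?thesis using j1 by simp
    next
      case False then have "i + 1 = n" using \<open>i < n\<close> by simp
      then show ?thesis using j1 n by simp
    qed
    ultimately have "cycle_adj n i j" unfolding cycle_adj_def using j1 by auto
    then show "a \<le> R k + R (k+1) \<and> R k + R (k+1) < b"
      using H \<open>i < n\<close> \<open>j < n\<close> \<open>i \<noteq> j\<close> unfolding R_def i_def j_def by auto
  qed
  have N: "\<forall>k l. a \<le> R k + R l \<longrightarrow> R k + R l < b \<longrightarrow> (k - l) mod int n \<in> {0, 1, int n - 1}"
  proof (intro allI impI)
    fix k l assume h1: "a \<le> R k + R l" and h2: "R k + R l < b"
    define i where "i = nat (k mod int n)"
    define j where "j = nat (l mod int n)"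
    have ii: "int i = k mod int n" using np unfolding i_def by simp
    have jj: "int j = l mod int n" using np unfolding j_def by simp
    have "i < n" "j < n" using ii jj np by (metis of_nat_less_iff pos_mod_bound)+
    show "(k - l) mod int n \<in> {0, 1, int n - 1}"
    proof (cases "i = j")
      case True
      then have "k mod int n = l mod int n" using ii jj by simp
      then show ?thesis by (simp add: mod_eq_dvd_iff)
    next
      case False
      then have "cycle_adj n i j" using H h1 h2 \<open>i < n\<close> \<open>j < n\<close> unfolding R_def i_def j_def by auto
      then have "j = (i+1) mod n \<or> i = (j+1) mod n" unfolding cycle_adj_def by auto
      then show ?thesis
      proof
        assume "j = (i+1) mod n"
        then have "int j = (int i + 1) mod int n" by (simp add: zmod_int add.commute)
        then have "l mod int n = (k + 1) mod int n" using ii jj by (simp add: mod_add_left_eq)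
        then have "int n dvd (k + 1 - l)" by (metis mod_eq_dvd_iff dvd_diff_commute)
        then have "(k - l + 1) mod int n = 0" by (simp add: algebra_simps)
        then have "((k - l) mod int n + 1) mod int n = 0" by (simp add: mod_add_left_eq)
        moreover have "0 \<le> (k - l) mod int n" "(k - l) mod int n < int n" using np by auto
        ultimately have "(k - l) mod int n + 1 = int n"
        proof -
          assume a1: "((k - l) mod int n + 1) mod int n = 0" and a2: "0 \<le> (k - l) mod int n" and a3: "(k - l) mod int n < int n"
          show ?thesis
          proof (rule ccontr)
            assume "\<not> ?thesis"
            then have "(k - l) mod int n + 1 < int n" using a3 by linarith
            then have "((k - l) mod int n + 1) mod int n = (k - l) mod int n + 1" using a2 by (simp add: mod_pos_pos_trivial)
            then show False using a1 a2 by linarith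
          qed
        qed
        then show ?thesis by auto
      next
        assume "i = (j+1) mod n"
        then have "int i = (int j + 1) mod int n" by (simp add: zmod_int add.commute)
        then have "k mod int n = (l + 1) mod int n" using ii jj by (simp add: mod_add_left_eq)
        then have "(k - l) mod int n = 1 mod int n" by (simp add: mod_eq_dvd_iff algebra_simps)
        then show ?thesis using n by simp
      qed
    qed
  qed
  show ?thesis by (rule that[OF E N P])
qed


theorem mainTheorem3:
  fixes n :: nat
  assumes "n \<ge> 5"
  shows "\<not> two_threshold {0..<n} (cycle_adj n)"
proof
  assume tt: "two_threshold {0..<n} (cycle_adj n)"
  obtain R :: "int \<Rightarrow> real" and a b where
   E: "\<forall>k. a \<le> R k + R (k+1) \<and> R k + R (k+1) < b" and
   N: "\<forall>k l. a \<le> R k + R l \<longrightarrow> R k + R l < b \<longrightarrow> (k - l) mod int n \<in> {0, 1, int n - 1}" and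
   P: "\<forall>k. R k = R (k mod int n)"
    by (rule reduce[OF assms tt])
  show False
  proof (cases "even n")
    case True then show ?thesis using even_case[OF assms E N P] by blast
  next
    case False then show ?thesis using odd_case[OF assms E N P] by blast
  qed
qed

end
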